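(* Let $h=u+v+u^{-1}+v^{-1}+u^{-1}v^{-1}\in A=\mathbb C\langle u^{\pm1},v^{\pm1}\rangle$. For all integers $N,M>0$, $\{h^N,h^M\}_K\in[A,A]$, i.e. $\{h^N,h^M\}_K\equiv0\bmod[A,A]$.
   Context: $A$ is the group algebra over $\mathbb C$ of the free group on $u,v$. $[A,A]$ is the linear span of all $ab-ba$, $a,b\in A$. $\mu:A\otimes A\to A$, $\mu(a\otimes b)=ab$; $A\otimes A$ has componentwise multiplication. The double bracket $\llbracket\cdot\rrbracket_K:A\otimes A\to A\otimes A$ is the linear map with $\llbracket u\otimes v\rrbracket_K=-vu\otimes1$, $\llbracket v\otimes u\rrbracket_K=uv\otimes1$, $\llbracket u\otimes u\rrbracket_K=\llbracket v\otimes v\rrbracket_K=0$, extended by the Leibniz rules $\llbracket a\otimes bc\rrbracket_K=\llbracket a\otimes b\rrbracket_K(1\otimes c)+(b\otimes1)\llbracket a\otimes c\rrbracket_K$ and $\llbracket ab\otimes c\rrbracket_K=\llbracket a\otimes c\rrbracket_K(b\otimes1)+(1\otimes a)\llbracket b\otimes c\rrbracket_K$ (so for monomials $a=a_1\cdots a_k$, $b=b_1\cdots b_m$ in letters $u^{\pm1},v^{\pm1}$, with $\llbracket a_i\otimes b_j\rrbracket_K=x_{ij}\otimes y_{ij}$, $\llbracket a\otimes b\rrbracket_K=\sum_{i,j}(b_1\cdots b_{j-1}x_{ij}a_{i+1}\cdots a_k)\otimes(a_1\cdots a_{i-1}y_{ij}b_{j+1}\cdots b_m)$; the values on inverse letters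 are those forced by the Leibniz rules, e.g. $\llbracket u^{-1}\otimes v^{-1}\rrbracket_K=-1\otimes u^{-1}v^{-1}$, $\llbracket u^{-1}\otimes v\rrbracket_K=v\otimes u^{-1}$, $\llbracket u\otimes v^{-1}\rrbracket_K=u\otimes v^{-1}$, $\llbracket v^{-1}\otimes u^{-1}\rrbracket_K=1\otimes v^{-1}u^{-1}$, $\llbracket v\otimes u^{-1}\rrbracket_K=-v\otimes u^{-1}$, $\llbracket v^{-1}\otimes u\rrbracket_K=-u\otimes v^{-1}$). The bracket is $\{a,b\}_K=\mu(\llbracket a\otimes b\rrbracket_K)$. *)

theory Defs
  imports Complex_Main "HOL-Library.Poly_Mapping"
begin

datatype letter = U | V | Ui | Vi

fun linv :: "letter \<Rightarrow> letter" where
  "linv U = Ui" | "linv V = Vi" | "linv Ui = U" | "linv Vi = V"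

lemma linv_linv [simp]: "linv (linv x) = x"
  by (cases x) auto

fun push :: "letter \<Rightarrow> letter list \<Rightarrow> letter list" where
  "push x [] = [x]"
| "push x (y # ys) = (if y = linv x then ys else x # y # ys)"

definition reduce :: "letter list \<Rightarrow> letter list" where
  "reduce w = foldr push w []"

fun is_reduced :: "letter list \<Rightarrow> bool" where
  "is_reduced [] = True"
| "is_reduced [x] = True"
| "is_reduced (x # y # ys) = (y \<noteq> linv x \<and> is_reduced (y # ys))"

lemma is_reduced_tl: "is_reduced (x # ys) \<Longrightarrow> is_reduced ys"
  by (cases ys) auto

lemma push_reduced: "is_reduced w \<Longrightarrow> is_reduced (push x w)"
  by (cases w) (auto dest: is_reduced_tl)

lemma foldr_push_reduced: "is_reduced r \<Longrightarrow> is_reduced (foldr push w r)"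
  by (induction w) (auto intro: push_reduced)

lemma reduce_reduced: "is_reduced (reduce w)"
  unfolding reduce_def by (rule foldr_push_reduced) simp

lemma push_push_linv: "is_reduced s \<Longrightarrow> push a (push (linv a) s) = s"
proof (cases s)
  case (Cons z zs)
  assume r: "is_reduced s"
  show ?thesis
  proof (cases "z = a")
    case True
    then show ?thesis using Cons r by (cases zs) auto
  next
    case False
    then show ?thesis using Cons by auto
  qed
qed simp

lemma foldr_push_reduced_id: "is_reduced w \<Longrightarrow> foldr push w [] = w"
proof (induction w rule: is_reduced.induct)
  case (3 x y ys)
  then show ?case by auto
qed auto

lemma reduce_id: "is_reduced w \<Longrightarrow> reduce w = w"
  by (simp add: reduce_def foldr_push_reduced_id)

lemma foldr_push_push:
  assumes "is_reduced l" "is_reduced r"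
  shows "foldr push (push a l) r = push a (foldr push l r)"
proof (cases l)
  case Nil then show ?thesis by simp
next
  case (Cons y ys)
  show ?thesis
  proof (cases "y = linv a")
    case True
    have "is_reduced (foldr push ys r)"
      using assms Cons by (intro foldr_push_reduced) auto
    then have "push a (push (linv a) (foldr push ys r)) = foldr push ys r"
      by (rule push_push_linv)
    then show ?thesis using Cons True by simp
  next
    case False
    then show ?thesis using Cons by simp
  qed
qed

lemma foldr_push_foldr:
  assumes "is_reduced l" "is_reduced r"
  shows "foldr push (foldr push x l) r = foldr push x (foldr push l r)"
  using assms
proof (induction x)
  case (Cons a x)
  have "foldr push (push a (foldr push x l)) r = push a (foldr push (foldr push x l) r)"
    using Cons.prems by (intro foldr_push_push foldr_push_reduced) auto
  then show ?case using Cons by simp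
qed simp

lemma reduce_append: "reduce (x @ y) = foldr push x (reduce y)"
  by (simp add: reduce_def)

typedef fg = "{w. is_reduced w}"
  by (rule exI[of _ "[]"]) simp

text \<open>The group operation of the free group (written additively so that the
  library group algebra fg =>0 complex applies; it is NOT commutative).\<close>
instantiation fg :: monoid_add
begin

definition zero_fg :: fg where "zero_fg = Abs_fg []"

definition plus_fg :: "fg \<Rightarrow> fg \<Rightarrow> fg" where
  "plus_fg a b = Abs_fg (reduce (Rep_fg a @ Rep_fg b))"

instance
proof
  fix a b c :: fg
  have ra: "is_reduced (Rep_fg a)" and rb: "is_reduced (Rep_fg b)" and rc: "is_reduced (Rep_fg c)"
    using Rep_fg by auto
  show "a + b + c = a + (b + c)"
    unfolding plus_fg_def
    using ra rb rc
    by (simp add: Abs_fg_inverse reduce_reduced reduce_append reduce_id foldr_push_foldr foldr_push_reduced)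
  show "0 + a = a"
    unfolding plus_fg_def zero_fg_def
    using ra by (simp add: Abs_fg_inverse reduce_id Rep_fg_inverse)
  show "a + 0 = a"
    unfolding plus_fg_def zero_fg_def
    using ra by (simp add: Abs_fg_inverse reduce_id Rep_fg_inverse)
qed

end

definition fgw :: "letter list \<Rightarrow> fg" where
  "fgw w = Abs_fg (reduce w)"

section \<open>The group algebra A = C[F(u,v)]\<close>

type_synonym galg = "fg \<Rightarrow>\<^sub>0 complex"

definition mono :: "letter list \<Rightarrow> galg" where
  "mono w = Poly_Mapping.single (fgw w) 1"

definition hK :: galg where
  "hK = mono [U] + mono [V] + mono [Ui] + mono [Vi] + mono [Ui, Vi]"

text \<open>The commutator subspace [A,A]: complex-linear span of all ab - ba.
  (Scalar multiplication by c is multiplication by the central element c\<cdot>1.)\<close>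
inductive_set comm_space :: "galg set" where
  zero: "0 \<in> comm_space"
| comm: "a * b - b * a \<in> comm_space"
| add: "x \<in> comm_space \<Longrightarrow> y \<in> comm_space \<Longrightarrow> x + y \<in> comm_space"
| smult: "x \<in> comm_space \<Longrightarrow> Poly_Mapping.single 0 c * x \<in> comm_space"

text \<open>A \<otimes> A is the free vector space on pairs of group elements.\<close>
type_synonym gtens = "(fg \<times> fg) \<Rightarrow>\<^sub>0 complex"

text \<open>Values on letters: lbr a b = (c, x, y) means double bracket of a,b is c \<cdot> x \<otimes> y.\<close>
fun lbr :: "letter \<Rightarrow> letter \<Rightarrow> complex \<times> letter list \<times> letter list" where
  "lbr U V = (-1, [V, U], [])"
| "lbr V U = (1, [U, V], [])"
| "lbr Ui Vi = (-1, [], [Ui, Vi])"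
| "lbr Ui V = (1, [V], [Ui])"
| "lbr U Vi = (1, [U], [Vi])"
| "lbr Vi Ui = (1, [], [Vi, Ui])"
| "lbr V Ui = (-1, [V], [Ui])"
| "lbr Vi U = (-1, [U], [Vi])"
| "lbr _ _ = (0, [], [])"

definition dbr_word :: "complex \<Rightarrow> letter list \<Rightarrow> letter list \<Rightarrow> gtens" where
  "dbr_word s a b =
     (\<Sum>i<length a. \<Sum>j<length b.
        (case lbr (a ! i) (b ! j) of (c, x, y) \<Rightarrow>
           Poly_Mapping.single
             (fgw (take j b @ x @ drop (Suc i) a), fgw (take i a @ y @ drop (Suc j) b))
             (s * c)))"

definition dbrK :: "galg \<Rightarrow> galg \<Rightarrow> gtens" where
  "dbrK f g = (\<Sum>p\<in>Poly_Mapping.keys f. \<Sum>q\<in>Poly_Mapping.keys g.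
                 dbr_word (Poly_Mapping.lookup f p * Poly_Mapping.lookup g q) (Rep_fg p) (Rep_fg q))"

definition muK :: "gtens \<Rightarrow> galg" where
  "muK T = (\<Sum>pq\<in>Poly_Mapping.keys T. Poly_Mapping.single (fst pq + snd pq) (Poly_Mapping.lookup T pq))"

definition brK :: "galg \<Rightarrow> galg \<Rightarrow> galg" where
  "brK f g = muK (dbrK f g)"

end

theory Submission
  imports Defs
begin


lemma Rep_fgw: "Rep_fg (fgw w) = reduce w"
  by (simp add: fgw_def Abs_fg_inverse reduce_reduced)

lemma fgw_Rep: "fgw (Rep_fg p) = p"
  using Rep_fg[of p] by (simp add: fgw_def reduce_id Rep_fg_inverse)

lemma reduce_reduce_append: "reduce (reduce a @ reduce b) = reduce (a @ b)"
proof -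
  have "reduce (reduce a @ reduce b) = foldr push (foldr push a []) (reduce b)"
    by (simp add: reduce_append reduce_id reduce_reduced reduce_def[of a])
  also have "\<dots> = foldr push a (foldr push [] (reduce b))"
    by (rule foldr_push_foldr) (auto simp: reduce_reduced)
  finally show ?thesis by (simp add: reduce_append)
qed

lemma fgw_append: "fgw (a @ b) = fgw a + fgw b"
  unfolding plus_fg_def Rep_fgw by (simp add: fgw_def reduce_reduce_append)

lemma fgw_Nil: "fgw [] = 0"
  by (simp add: fgw_def zero_fg_def reduce_def)

lemma mono_append: "mono (a @ b) = mono a * mono b"
  by (simp add: mono_def mult_single fgw_append)

lemma mono_Nil: "mono [] = 1"
  by (simp add: mono_def fgw_Nil)


section \<open>commutator space\<close>

lemma cs_neg: "x \<in> comm_space \<Longrightarrow> - x \<in> comm_space"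
  using comm_space.smult[of x "-1"] by (simp add: single_uminus)

lemma cs_diff: "x \<in> comm_space \<Longrightarrow> y \<in> comm_space \<Longrightarrow> x - y \<in> comm_space"
  using comm_space.add[OF _ cs_neg[of y], of x] by (simp only: diff_conv_add_uminus)

lemma cs_sum: "(\<And>i. i \<in> I \<Longrightarrow> f i \<in> comm_space) \<Longrightarrow> sum f I \<in> comm_space"
  by (induction I rule: infinite_finite_induct) (auto intro: comm_space.intros)

definition eqv :: "galg \<Rightarrow> galg \<Rightarrow> bool" (infix "\<approx>" 50) where
  "x \<approx> y \<longleftrightarrow> x - y \<in> comm_space"

lemma eqv_refl [simp]: "x \<approx> x"
  by (simp add: eqv_def comm_space.zero)

lemma eqv_sym: "x \<approx> y \<Longrightarrow> y \<approx> x"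
  unfolding eqv_def using cs_neg[of "x - y"] by simp

lemma eqv_trans: "x \<approx> y \<Longrightarrow> y \<approx> z \<Longrightarrow> x \<approx> z"
  unfolding eqv_def using comm_space.add[of "x - y" "y - z"] by simp

lemma eqv_add: "x \<approx> y \<Longrightarrow> x' \<approx> y' \<Longrightarrow> x + x' \<approx> y + y'"
proof -
  assume a: "x \<approx> y" "x' \<approx> y'"
  have "x + x' - (y + y') = (x - y) + (x' - y')" by (simp add: algebra_simps)
  then show ?thesis using a comm_space.add unfolding eqv_def by metis
qed

lemma eqv_diff: "x \<approx> y \<Longrightarrow> x' \<approx> y' \<Longrightarrow> x - x' \<approx> y - y'"
proof -
  assume a: "x \<approx> y" "x' \<approx> y'"
  have "x - x' - (y - y') = (x - y) - (x' - y')" by (simp add: algebra_simps)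
  then show ?thesis using a cs_diff unfolding eqv_def by metis
qed

lemma eqv_smult: "x \<approx> y \<Longrightarrow> Poly_Mapping.single 0 c * x \<approx> Poly_Mapping.single 0 c * y"
  unfolding eqv_def using comm_space.smult[of "x - y" c] by (simp add: right_diff_distrib)

lemma eqv_sum: "(\<And>i. i \<in> I \<Longrightarrow> f i \<approx> g i) \<Longrightarrow> sum f I \<approx> sum g I"
  unfolding eqv_def using cs_sum[of I "\<lambda>i. f i - g i"] by (simp add: sum_subtractf)

lemma eqv_rot: "a * b \<approx> b * a"
  by (simp add: eqv_def comm_space.comm)

lemma eqv_zero_cs: "x \<approx> 0 \<Longrightarrow> x \<in> comm_space"
  by (simp add: eqv_def)

lemma eqv_cs: "x \<approx> y \<Longrightarrow> y \<in> comm_space \<Longrightarrow> x \<in> comm_space"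
  unfolding eqv_def using comm_space.add[of "x - y" y] by simp

section \<open>scalars\<close>

lemma single0_mult_single: "Poly_Mapping.single 0 c * Poly_Mapping.single p a = Poly_Mapping.single p a * Poly_Mapping.single 0 (c::complex)"
  by (simp add: mult_single mult.commute)

lemma pm_decomp: "(f::'a \<Rightarrow>\<^sub>0 complex) = (\<Sum>p\<in>Poly_Mapping.keys f. Poly_Mapping.single p (Poly_Mapping.lookup f p))"
  by (rule poly_mapping_eqI) (auto simp: lookup_sum lookup_single when_def in_keys_iff intro!: sum.neutral)

lemma single0_central: "Poly_Mapping.single 0 c * (f::galg) = f * Poly_Mapping.single 0 c"
proof -
  have "Poly_Mapping.single 0 c * (\<Sum>p\<in>Poly_Mapping.keys f. Poly_Mapping.single p (Poly_Mapping.lookup f p))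
     = (\<Sum>p\<in>Poly_Mapping.keys f. Poly_Mapping.single p (Poly_Mapping.lookup f p)) * Poly_Mapping.single 0 c"
    by (simp add: sum_distrib_left sum_distrib_right single0_mult_single)
  then show ?thesis by (simp only: pm_decomp[symmetric])
qed

lemma single0_mult: "Poly_Mapping.single 0 c * Poly_Mapping.single 0 d = (Poly_Mapping.single 0 (c * d) :: galg)"
  by (simp add: mult_single)

lemma single0_add: "Poly_Mapping.single 0 (c + d) = Poly_Mapping.single 0 c + (Poly_Mapping.single 0 d :: galg)"
  by (simp add: single_add)

section \<open>linear extension\<close>

definition ext :: "(fg \<Rightarrow> galg) \<Rightarrow> galg \<Rightarrow> galg" where
  "ext G f = (\<Sum>p\<in>Poly_Mapping.keys f. Poly_Mapping.single 0 (Poly_Mapping.lookup f p) * G p)"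

lemma ext_superset: "finite S \<Longrightarrow> Poly_Mapping.keys f \<subseteq> S \<Longrightarrow>
   ext G f = (\<Sum>p\<in>S. Poly_Mapping.single 0 (Poly_Mapping.lookup f p) * G p)"
  unfolding ext_def by (rule sum.mono_neutral_left) (auto simp: in_keys_iff)

lemma ext_add: "ext G (f + g) = ext G f + ext G g"
proof -
  let ?S = "Poly_Mapping.keys f \<union> Poly_Mapping.keys g"
  have "ext G (f + g) = (\<Sum>p\<in>?S. Poly_Mapping.single 0 (Poly_Mapping.lookup (f+g) p) * G p)"
    by (rule ext_superset) (auto simp: keys_add)
  also have "\<dots> = (\<Sum>p\<in>?S. Poly_Mapping.single 0 (Poly_Mapping.lookup f p) * G p)
      + (\<Sum>p\<in>?S. Poly_Mapping.single 0 (Poly_Mapping.lookup g p) * G p)"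
    by (simp add: lookup_add single_add distrib_right sum.distrib)
  also have "\<dots> = ext G f + ext G g"
    by (subst (1 2) ext_superset[of ?S]) auto
  finally show ?thesis .
qed

lemma ext_zero [simp]: "ext G 0 = 0"
  by (simp add: ext_def)

lemma ext_sum: "ext G (sum f I) = (\<Sum>i\<in>I. ext G (f i))"
  by (induction I rule: infinite_finite_induct) (auto simp: ext_add)

lemma ext_single: "ext G (Poly_Mapping.single p c) = Poly_Mapping.single 0 c * G p"
  by (cases "c = 0") (simp_all add: ext_def)

lemma ext_fun_add: "ext (\<lambda>p. G p + G' p) f = ext G f + ext G' f"
  by (simp add: ext_def distrib_left sum.distrib)

lemma ext_eqv: "(\<And>p. G p \<approx> G' p) \<Longrightarrow> ext G f \<approx> ext G' f"
  unfolding ext_def by (intro eqv_sum eqv_smult) auto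

lemma ext_cs: "(\<And>p. G p \<in> comm_space) \<Longrightarrow> ext G f \<in> comm_space"
  unfolding ext_def by (intro cs_sum comm_space.smult) auto

lemma sc_left: "(X::galg) * (Poly_Mapping.single 0 c * Z) = Poly_Mapping.single 0 c * (X * Z)"
  by (metis mult.assoc single0_central)

lemma sc_comm: "Poly_Mapping.single 0 s * (Poly_Mapping.single 0 c * (Z::galg)) = Poly_Mapping.single 0 c * (Poly_Mapping.single 0 s * Z)"
  by (simp add: mult.assoc[symmetric] single0_mult mult.commute)

lemma sc_mult: "Poly_Mapping.single 0 (s * c) * (Z::galg) = Poly_Mapping.single 0 s * (Poly_Mapping.single 0 c * Z)"
  by (simp add: mult.assoc[symmetric] single0_mult)

definition lin :: "(galg \<Rightarrow> galg) \<Rightarrow> bool" where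
  "lin F \<longleftrightarrow> (\<forall>P1 P2. F (P1 + P2) = F P1 + F P2) \<and> (\<forall>c P. F (Poly_Mapping.single 0 c * P) = Poly_Mapping.single 0 c * F P)"

lemma lin_add: "lin F \<Longrightarrow> F (P1 + P2) = F P1 + F P2"
  by (simp add: lin_def)

lemma lin_smult: "lin F \<Longrightarrow> F (Poly_Mapping.single 0 c * P) = Poly_Mapping.single 0 c * F P"
  by (simp add: lin_def)

lemma lin_zero: "lin F \<Longrightarrow> F 0 = 0"
  using lin_smult[of F 0 0] by simp

lemma lin_sum: "lin F \<Longrightarrow> F (sum G I) = (\<Sum>i\<in>I. F (G i))"
  by (induction I rule: infinite_finite_induct) (auto simp: lin_zero lin_add)

lemma lin_ext: "(\<And>q. lin (G q)) \<Longrightarrow> lin (\<lambda>P. ext (\<lambda>q. G q P) f)"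
  unfolding lin_def ext_def
  by (auto simp: distrib_left sum.distrib sum_distrib_left sc_comm)

lemma mult_decomp_left: "(f::galg) * P = (\<Sum>q\<in>Poly_Mapping.keys f. Poly_Mapping.single 0 (Poly_Mapping.lookup f q) * (Poly_Mapping.single q 1 * P))"
proof -
  have "f * P = (\<Sum>q\<in>Poly_Mapping.keys f. Poly_Mapping.single q (Poly_Mapping.lookup f q)) * P"
    by (simp only: pm_decomp[symmetric])
  also have "\<dots> = (\<Sum>q\<in>Poly_Mapping.keys f. Poly_Mapping.single 0 (Poly_Mapping.lookup f q) * (Poly_Mapping.single q 1 * P))"
    by (simp add: sum_distrib_right mult.assoc[symmetric] mult_single)
  finally show ?thesis .
qed

lemma mult_decomp_right: "P * (f::galg) = (\<Sum>q\<in>Poly_Mapping.keys f. Poly_Mapping.single 0 (Poly_Mapping.lookup f q) * (P * Poly_Mapping.single q 1))"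
proof -
  have "P * f = P * (\<Sum>q\<in>Poly_Mapping.keys f. Poly_Mapping.single q (Poly_Mapping.lookup f q))"
    by (simp only: pm_decomp[symmetric])
  also have "\<dots> = (\<Sum>q\<in>Poly_Mapping.keys f. Poly_Mapping.single 0 (Poly_Mapping.lookup f q) * (P * Poly_Mapping.single q 1))"
  proof (simp only: sum_distrib_left, rule sum.cong)
    fix q
    have "Poly_Mapping.single q (Poly_Mapping.lookup f q) = Poly_Mapping.single 0 (Poly_Mapping.lookup f q) * (Poly_Mapping.single q 1::galg)"
      by (simp add: mult_single)
    then show "P * Poly_Mapping.single q (Poly_Mapping.lookup f q) = Poly_Mapping.single 0 (Poly_Mapping.lookup f q) * (P * Poly_Mapping.single q 1)"
      by (simp add: sc_left)
  qed simp
  finally show ?thesis .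
qed

lemma ext_mult: "ext G (f1 * f2) = (\<Sum>p\<in>Poly_Mapping.keys f1. \<Sum>q\<in>Poly_Mapping.keys f2.
   Poly_Mapping.single 0 (Poly_Mapping.lookup f1 p * Poly_Mapping.lookup f2 q) * G (p + q))"
proof -
  have "f1 * f2 = (\<Sum>p\<in>Poly_Mapping.keys f1. Poly_Mapping.single p (Poly_Mapping.lookup f1 p)) *
     (\<Sum>q\<in>Poly_Mapping.keys f2. Poly_Mapping.single q (Poly_Mapping.lookup f2 q))"
    by (simp only: pm_decomp[symmetric])
  also have "\<dots> = (\<Sum>p\<in>Poly_Mapping.keys f1. \<Sum>q\<in>Poly_Mapping.keys f2.
     Poly_Mapping.single (p + q) (Poly_Mapping.lookup f1 p * Poly_Mapping.lookup f2 q))"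
    by (simp add: sum_product mult_single)
  finally show ?thesis by (simp add: ext_sum ext_single)
qed

lemma mono_Rep: "mono (Rep_fg p) = Poly_Mapping.single p 1"
  by (simp add: mono_def fgw_Rep)

lemma Rep_plus: "Rep_fg (p + q) = reduce (Rep_fg p @ Rep_fg q)"
  by (simp add: plus_fg_def Abs_fg_inverse reduce_reduced)

lemma mono_reduce: "mono (reduce w) = mono w"
  by (simp add: mono_def fgw_def reduce_id reduce_reduced)



definition gterm :: "letter list \<Rightarrow> nat \<Rightarrow> letter list \<Rightarrow> nat \<Rightarrow> galg \<Rightarrow> galg \<Rightarrow> galg" where
  "gterm a i b j P Q = (case lbr (a ! i) (b ! j) of (s, x, y) \<Rightarrow>
     Poly_Mapping.single 0 s * (mono (x @ drop (Suc i) a) * P * mono (take i a @ y @ drop (Suc j) b) * Q * mono (take j b)))"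

definition Gam :: "letter list \<Rightarrow> galg \<Rightarrow> letter list \<Rightarrow> galg \<Rightarrow> galg" where
  "Gam a P b Q = (\<Sum>i<length a. \<Sum>j<length b. gterm a i b j P Q)"

lemma sum_lessThan_add: "(\<Sum>i<(m::nat)+n. f i) = (\<Sum>i<m. f i) + (\<Sum>i<n. f (m+i))"
  by (induction n) (simp_all add: add.assoc)

lemma gterm_app_a1: "i < length a1 \<Longrightarrow> gterm (a1 @ a2) i b j P Q = gterm a1 i b j (mono a2 * P) Q"
  unfolding gterm_def
  by (cases "lbr (a1 ! i) (b ! j)") (simp add: nth_append mono_append mult.assoc)

lemma gterm_app_a2: "gterm (a1 @ a2) (length a1 + i) b j P Q = gterm a2 i b j (P * mono a1) Q"
  unfolding gterm_def
  by (cases "lbr (a2 ! i) (b ! j)") (simp add: mono_append mult.assoc)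

lemma Gam_append_a: "Gam (a1 @ a2) P b Q = Gam a1 (mono a2 * P) b Q + Gam a2 (P * mono a1) b Q"
  unfolding Gam_def by (simp add: sum_lessThan_add gterm_app_a1 gterm_app_a2)

lemma gterm_app_b1: "j < length b1 \<Longrightarrow> gterm a i (b1 @ b2) j P Q = gterm a i b1 j P (mono b2 * Q)"
  unfolding gterm_def
  by (cases "lbr (a ! i) (b1 ! j)") (simp add: nth_append mono_append mult.assoc)

lemma gterm_app_b2: "gterm a i (b1 @ b2) (length b1 + j) P Q = gterm a i b2 j P (Q * mono b1)"
  unfolding gterm_def
  by (cases "lbr (a ! i) (b2 ! j)") (simp add: mono_append mult.assoc)

lemma Gam_append_b: "Gam a P (b1 @ b2) Q = Gam a P b1 (mono b2 * Q) + Gam a P b2 (Q * mono b1)"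
  unfolding Gam_def by (simp add: sum_lessThan_add gterm_app_b1 gterm_app_b2 sum.distrib)

lemma lin_gterm_P: "lin (\<lambda>P. gterm a i b j P Q)"
  unfolding lin_def gterm_def
proof (cases "lbr (a ! i) (b ! j)", intro conjI allI)
  case (fields s x y)
  fix P1 P2 show "(case lbr (a ! i) (b ! j) of (s, x, y) \<Rightarrow>
     Poly_Mapping.single 0 s * (mono (x @ drop (Suc i) a) * (P1 + P2) * mono (take i a @ y @ drop (Suc j) b) * Q * mono (take j b))) =
    (case lbr (a ! i) (b ! j) of (s, x, y) \<Rightarrow>
     Poly_Mapping.single 0 s * (mono (x @ drop (Suc i) a) * P1 * mono (take i a @ y @ drop (Suc j) b) * Q * mono (take j b))) +
    (case lbr (a ! i) (b ! j) of (s, x, y) \<Rightarrow>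
     Poly_Mapping.single 0 s * (mono (x @ drop (Suc i) a) * P2 * mono (take i a @ y @ drop (Suc j) b) * Q * mono (take j b)))"
    using fields by (simp add: algebra_simps)
next
  case (fields s x y)
  fix c P show "(case lbr (a ! i) (b ! j) of (s, x, y) \<Rightarrow>
     Poly_Mapping.single 0 s * (mono (x @ drop (Suc i) a) * (Poly_Mapping.single 0 c * P) * mono (take i a @ y @ drop (Suc j) b) * Q * mono (take j b))) =
    Poly_Mapping.single 0 c * (case lbr (a ! i) (b ! j) of (s, x, y) \<Rightarrow>
     Poly_Mapping.single 0 s * (mono (x @ drop (Suc i) a) * P * mono (take i a @ y @ drop (Suc j) b) * Q * mono (take j b)))"
    using fields apply (simp only: prod.case mult.assoc)
    apply (subst sc_left)
    apply (rule sc_comm)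
    done
qed

lemma lin_gterm_Q: "lin (\<lambda>Q. gterm a i b j P Q)"
  unfolding lin_def gterm_def
proof (cases "lbr (a ! i) (b ! j)", intro conjI allI)
  case (fields s x y)
  fix P1 P2 show "(case lbr (a ! i) (b ! j) of (s, x, y) \<Rightarrow>
     Poly_Mapping.single 0 s * (mono (x @ drop (Suc i) a) * P * mono (take i a @ y @ drop (Suc j) b) * (P1 + P2) * mono (take j b))) =
    (case lbr (a ! i) (b ! j) of (s, x, y) \<Rightarrow>
     Poly_Mapping.single 0 s * (mono (x @ drop (Suc i) a) * P * mono (take i a @ y @ drop (Suc j) b) * P1 * mono (take j b))) +
    (case lbr (a ! i) (b ! j) of (s, x, y) \<Rightarrow>
     Poly_Mapping.single 0 s * (mono (x @ drop (Suc i) a) * P * mono (take i a @ y @ drop (Suc j) b) * P2 * mono (take j b)))"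
    using fields by (simp add: algebra_simps)
next
  case (fields s x y)
  fix c Q show "(case lbr (a ! i) (b ! j) of (s, x, y) \<Rightarrow>
     Poly_Mapping.single 0 s * (mono (x @ drop (Suc i) a) * P * mono (take i a @ y @ drop (Suc j) b) * (Poly_Mapping.single 0 c * Q) * mono (take j b))) =
    Poly_Mapping.single 0 c * (case lbr (a ! i) (b ! j) of (s, x, y) \<Rightarrow>
     Poly_Mapping.single 0 s * (mono (x @ drop (Suc i) a) * P * mono (take i a @ y @ drop (Suc j) b) * Q * mono (take j b)))"
    using fields apply (simp only: prod.case mult.assoc)
    apply (subst sc_left, subst sc_left, subst sc_left)
    apply (rule sc_comm)
    done
qed

lemma lin_sum_fun: "(\<And>i. lin (F i)) \<Longrightarrow> lin (\<lambda>P. \<Sum>i\<in>I. F i P)"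
  unfolding lin_def by (simp add: sum.distrib sum_distrib_left)

lemma lin_Gam_P: "lin (\<lambda>P. Gam a P b Q)"
  unfolding Gam_def by (intro lin_sum_fun lin_gterm_P)

lemma lin_Gam_Q: "lin (\<lambda>Q. Gam a P b Q)"
  unfolding Gam_def by (intro lin_sum_fun lin_gterm_Q)

definition ml :: "letter \<Rightarrow> galg" where "ml x = mono [x]"

lemma mono_Cons: "mono (a # w) = ml a * mono w"
  using mono_append[of "[a]" w] by (simp add: ml_def)

lemma ml_pair: "ml x * ml (linv x) = 1"
proof -
  have "ml x * ml (linv x) = mono (reduce [x, linv x])"
    by (simp add: mono_reduce mono_Cons mono_Nil)
  also have "reduce [x, linv x] = []" by (simp add: reduce_def)
  finally show ?thesis by (simp add: mono_Nil)
qed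

lemma ml_pairZ: "ml x * (ml (linv x) * Z) = Z"
  by (simp add: mult.assoc[symmetric] ml_pair)

lemma mono_pair: "mono [x, linv x] = 1"
  by (simp add: mono_Cons mono_Nil ml_pair)

lemmas mono_simps = mono_Cons mono_Nil mono_append mult.assoc
  ml_pair[of U, simplified] ml_pair[of V, simplified] ml_pair[of Ui, simplified] ml_pair[of Vi, simplified]
  ml_pairZ[of U, simplified] ml_pairZ[of V, simplified] ml_pairZ[of Ui, simplified] ml_pairZ[of Vi, simplified]
  single_uminus single_one

lemma gterm_cancel_a: "gterm [c, linv c] 0 b j P Q + gterm [c, linv c] (Suc 0) b j P Q = 0"
  unfolding gterm_def by (cases c; cases "b ! j") (simp_all add: mono_simps)

lemma Gam_cancel_a: "Gam [c, linv c] P b Q = 0"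
proof -
  have "Gam [c, linv c] P b Q = (\<Sum>j<length b. gterm [c, linv c] 0 b j P Q + gterm [c, linv c] (Suc 0) b j P Q)"
    by (simp add: Gam_def numeral_2_eq_2 sum.distrib)
  also have "\<dots> = 0" by (simp add: gterm_cancel_a)
  finally show ?thesis .
qed

lemma Gam_push_a: "Gam (push x r) P b Q = Gam (x # r) P b Q"
proof (cases r)
  case (Cons y r')
  show ?thesis
  proof (cases "y = linv x")
    case True
    have "x # r = [x, linv x] @ r'" using Cons True by simp
    then have "Gam (x # r) P b Q = Gam ([x, linv x] @ r') P b Q" by simp
    also have "\<dots> = Gam r' P b Q"
      by (simp only: Gam_append_a Gam_cancel_a mono_pair) simp
    finally show ?thesis using Cons True by simp
  qed (simp add: Cons)
qed simp

lemma reduce_Cons: "reduce (x # w) = push x (reduce w)"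
  by (simp add: reduce_def)

lemma Gam_reduce_a: "Gam (reduce w) P b Q = Gam w P b Q"
proof (induction w arbitrary: P)
  case Nil then show ?case by (simp add: reduce_def)
next
  case (Cons x w)
  have "Gam (x # w) P b Q = Gam [x] (mono w * P) b Q + Gam w (P * mono [x]) b Q"
    using Gam_append_a[of "[x]" w] by simp
  also have "\<dots> = Gam [x] (mono (reduce w) * P) b Q + Gam (reduce w) (P * mono [x]) b Q"
    by (simp add: mono_reduce Cons.IH)
  also have "\<dots> = Gam (x # reduce w) P b Q"
    using Gam_append_a[of "[x]" "reduce w"] by simp
  also have "\<dots> = Gam (reduce (x # w)) P b Q"
    by (simp add: reduce_Cons Gam_push_a)
  finally show ?case by simp
qed



declare eqv_trans[trans]


lemma gterm_rot_b: "gterm a i [d, linv d] (Suc 0) P Q \<approx> (case lbr (a ! i) (linv d) of (s, x, y) \<Rightarrow>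
   Poly_Mapping.single 0 s * (mono [d] * (mono (x @ drop (Suc i) a) * P * mono (take i a @ y) * Q)))"
proof (cases "lbr (a ! i) (linv d)")
  case (fields s x y)
  then show ?thesis unfolding gterm_def
    using eqv_smult[OF eqv_rot[of "mono (x @ drop (Suc i) a) * P * mono (take i a @ y) * Q" "mono [d]"], of s]
    by simp
qed

lemma gterm_cancel_b: "gterm a i [d, linv d] 0 P Q + (case lbr (a ! i) (linv d) of (s, x, y) \<Rightarrow>
   Poly_Mapping.single 0 s * (mono [d] * (mono (x @ drop (Suc i) a) * P * mono (take i a @ y) * Q))) = 0"
  unfolding gterm_def by (cases "a ! i"; cases d) (simp_all add: mono_simps)

lemma Gam_cancel_b: "Gam a P [d, linv d] Q \<approx> 0"
proof -
  have "Gam a P [d, linv d] Q = (\<Sum>i<length a. gterm a i [d, linv d] 0 P Q + gterm a i [d, linv d] (Suc 0) P Q)"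
    by (simp add: Gam_def numeral_2_eq_2)
  also have "\<dots> \<approx> (\<Sum>i<length a. 0)"
    by (rule eqv_sum) (metis (no_types, lifting) eqv_add eqv_refl gterm_rot_b gterm_cancel_b)
  finally show ?thesis by simp
qed

lemma Gam_push_b: "Gam a P (push x r) Q \<approx> Gam a P (x # r) Q"
proof (cases r)
  case (Cons y r')
  show ?thesis
  proof (cases "y = linv x")
    case True
    have "x # r = [x, linv x] @ r'" using Cons True by simp
    then have "Gam a P (x # r) Q = Gam a P ([x, linv x] @ r') Q" by simp
    also have "\<dots> = Gam a P [x, linv x] (mono r' * Q) + Gam a P r' Q"
      by (simp only: Gam_append_b mono_pair) simp
    also have "\<dots> \<approx> 0 + Gam a P r' Q"
      by (intro eqv_add Gam_cancel_b eqv_refl)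
    finally show ?thesis using Cons True by (simp add: eqv_sym)
  qed (simp add: Cons)
qed simp

lemma Gam_reduce_b: "Gam a P w Q \<approx> Gam a P (reduce w) Q"
proof (induction w arbitrary: Q)
  case Nil then show ?case by (simp add: reduce_def)
next
  case (Cons x w)
  have "Gam a P (x # w) Q = Gam a P [x] (mono w * Q) + Gam a P w (Q * mono [x])"
    using Gam_append_b[of a P "[x]" w] by simp
  also have "\<dots> \<approx> Gam a P [x] (mono (reduce w) * Q) + Gam a P (reduce w) (Q * mono [x])"
    by (simp add: mono_reduce eqv_add Cons.IH)
  also have "\<dots> = Gam a P (x # reduce w) Q"
    using Gam_append_b[of a P "[x]" "reduce w"] by simp
  also have "\<dots> \<approx> Gam a P (reduce (x # w)) Q"
    by (simp add: reduce_Cons Gam_push_b eqv_sym)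
  finally show ?case by simp
qed



definition GamR :: "letter list \<Rightarrow> galg \<Rightarrow> galg \<Rightarrow> galg \<Rightarrow> galg" where
  "GamR a P g Q = ext (\<lambda>q. Gam a P (Rep_fg q) Q) g"

definition GamT :: "galg \<Rightarrow> galg \<Rightarrow> galg \<Rightarrow> galg \<Rightarrow> galg" where
  "GamT f P g Q = ext (\<lambda>p. GamR (Rep_fg p) P g Q) f"

lemma lin_GamR_P: "lin (\<lambda>P. GamR a P g Q)"
  unfolding GamR_def by (rule lin_ext[of "\<lambda>q P. Gam a P (Rep_fg q) Q", simplified]) (rule lin_Gam_P)

lemma lin_GamR_Q: "lin (\<lambda>Q. GamR a P g Q)"
  unfolding GamR_def by (rule lin_ext[of "\<lambda>q Q. Gam a P (Rep_fg q) Q", simplified]) (rule lin_Gam_Q)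

lemma lin_GamT_P: "lin (\<lambda>P. GamT f P g Q)"
  unfolding GamT_def by (rule lin_ext[of "\<lambda>p P. GamR (Rep_fg p) P g Q", simplified]) (rule lin_GamR_P)

lemma lin_GamT_Q: "lin (\<lambda>Q. GamT f P g Q)"
  unfolding GamT_def by (rule lin_ext[of "\<lambda>p Q. GamR (Rep_fg p) P g Q", simplified]) (rule lin_GamR_Q)

lemma ext_mult_split:
  assumes linA: "\<And>p. lin (A p)" and linB: "\<And>q. lin (B q)"
  shows "(\<Sum>p\<in>Poly_Mapping.keys f1. \<Sum>q\<in>Poly_Mapping.keys f2.
     Poly_Mapping.single 0 (Poly_Mapping.lookup f1 p * Poly_Mapping.lookup f2 q) *
       (A p (Poly_Mapping.single q 1 * X) + B q (X * Poly_Mapping.single p 1)))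
   = ext (\<lambda>p. A p (f2 * X)) f1 + ext (\<lambda>q. B q (X * f1)) f2"
proof -
  have 1: "(\<Sum>p\<in>Poly_Mapping.keys f1. \<Sum>q\<in>Poly_Mapping.keys f2.
     Poly_Mapping.single 0 (Poly_Mapping.lookup f1 p * Poly_Mapping.lookup f2 q) * A p (Poly_Mapping.single q 1 * X))
     = ext (\<lambda>p. A p (f2 * X)) f1"
    unfolding ext_def
  proof (rule sum.cong[OF refl])
    fix p
    have "A p (f2 * X) = (\<Sum>q\<in>Poly_Mapping.keys f2. Poly_Mapping.single 0 (Poly_Mapping.lookup f2 q) * A p (Poly_Mapping.single q 1 * X))"
      by (simp add: mult_decomp_left[of f2 X] lin_sum[OF linA] lin_smult[OF linA])
    then show "(\<Sum>q\<in>Poly_Mapping.keys f2. Poly_Mapping.single 0 (Poly_Mapping.lookup f1 p * Poly_Mapping.lookup f2 q) * A p (Poly_Mapping.single q 1 * X))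
       = Poly_Mapping.single 0 (Poly_Mapping.lookup f1 p) * A p (f2 * X)"
      by (simp add: sum_distrib_left sc_mult)
  qed
  have 2: "(\<Sum>p\<in>Poly_Mapping.keys f1. \<Sum>q\<in>Poly_Mapping.keys f2.
     Poly_Mapping.single 0 (Poly_Mapping.lookup f1 p * Poly_Mapping.lookup f2 q) * B q (X * Poly_Mapping.single p 1))
     = ext (\<lambda>q. B q (X * f1)) f2"
    unfolding ext_def
    apply (subst sum.swap)
  proof (rule sum.cong[OF refl])
    fix q
    have "B q (X * f1) = (\<Sum>p\<in>Poly_Mapping.keys f1. Poly_Mapping.single 0 (Poly_Mapping.lookup f1 p) * B q (X * Poly_Mapping.single p 1))"
      by (simp add: mult_decomp_right[of X f1] lin_sum[OF linB] lin_smult[OF linB])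
    then show "(\<Sum>p\<in>Poly_Mapping.keys f1. Poly_Mapping.single 0 (Poly_Mapping.lookup f1 p * Poly_Mapping.lookup f2 q) * B q (X * Poly_Mapping.single p 1))
       = Poly_Mapping.single 0 (Poly_Mapping.lookup f2 q) * B q (X * f1)"
      by (simp add: sum_distrib_left sc_mult sc_comm)
  qed
  show ?thesis
    by (simp add: distrib_left sum.distrib 1 2)
qed

lemma GamR_append_a: "GamR (a1 @ a2) P g Q = GamR a1 (mono a2 * P) g Q + GamR a2 (P * mono a1) g Q"
  unfolding GamR_def by (simp add: Gam_append_a ext_fun_add)

lemma GamR_reduce_a: "GamR (reduce a) P g Q = GamR a P g Q"
  unfolding GamR_def by (simp add: Gam_reduce_a)

lemma GamT_mult_a: "GamT (f1 * f2) P g Q = GamT f1 (f2 * P) g Q + GamT f2 (P * f1) g Q"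
proof -
  have "GamT (f1 * f2) P g Q = (\<Sum>p\<in>Poly_Mapping.keys f1. \<Sum>q\<in>Poly_Mapping.keys f2.
     Poly_Mapping.single 0 (Poly_Mapping.lookup f1 p * Poly_Mapping.lookup f2 q) *
       (GamR (Rep_fg p) (Poly_Mapping.single q 1 * P) g Q + GamR (Rep_fg q) (P * Poly_Mapping.single p 1) g Q))"
    unfolding GamT_def ext_mult
    by (simp add: Rep_plus GamR_reduce_a GamR_append_a mono_Rep)
  also have "\<dots> = GamT f1 (f2 * P) g Q + GamT f2 (P * f1) g Q"
    unfolding GamT_def
    by (rule ext_mult_split[of "\<lambda>p P. GamR (Rep_fg p) P g Q" "\<lambda>q P. GamR (Rep_fg q) P g Q"]) (rule lin_GamR_P)+
  finally show ?thesis .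
qed

lemma GamR_mult_b: "GamR a P (g1 * g2) Q \<approx> GamR a P g1 (g2 * Q) + GamR a P g2 (Q * g1)"
proof -
  have "GamR a P (g1 * g2) Q \<approx> (\<Sum>p\<in>Poly_Mapping.keys g1. \<Sum>q\<in>Poly_Mapping.keys g2.
     Poly_Mapping.single 0 (Poly_Mapping.lookup g1 p * Poly_Mapping.lookup g2 q) *
       (Gam a P (Rep_fg p) (Poly_Mapping.single q 1 * Q) + Gam a P (Rep_fg q) (Q * Poly_Mapping.single p 1)))"
    unfolding GamR_def ext_mult
  proof (intro eqv_sum eqv_smult)
    fix p q
    have "Gam a P (Rep_fg (p + q)) Q \<approx> Gam a P (Rep_fg p @ Rep_fg q) Q"
      unfolding Rep_plus by (rule eqv_sym, rule Gam_reduce_b)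
    then show "Gam a P (Rep_fg (p + q)) Q \<approx> Gam a P (Rep_fg p) (Poly_Mapping.single q 1 * Q) + Gam a P (Rep_fg q) (Q * Poly_Mapping.single p 1)"
      by (simp add: Gam_append_b mono_Rep)
  qed
  also have "\<dots> = GamR a P g1 (g2 * Q) + GamR a P g2 (Q * g1)"
    unfolding GamR_def
    by (rule ext_mult_split[of "\<lambda>p Q. Gam a P (Rep_fg p) Q" "\<lambda>q Q. Gam a P (Rep_fg q) Q"]) (rule lin_Gam_Q)+
  finally show ?thesis .
qed

lemma GamT_mult_b: "GamT f P (g1 * g2) Q \<approx> GamT f P g1 (g2 * Q) + GamT f P g2 (Q * g1)"
  unfolding GamT_def ext_fun_add[symmetric] by (rule ext_eqv) (rule GamR_mult_b)



definition gterm' :: "letter list \<Rightarrow> nat \<Rightarrow> letter list \<Rightarrow> nat \<Rightarrow> galg \<Rightarrow> galg \<Rightarrow> galg" where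
  "gterm' a i b j P Q = (case lbr (a ! i) (b ! j) of (s, x, y) \<Rightarrow>
     Poly_Mapping.single 0 s * (mono (take j b @ x @ drop (Suc i) a) * P * mono (take i a @ y @ drop (Suc j) b) * Q))"

definition Gam' :: "letter list \<Rightarrow> galg \<Rightarrow> letter list \<Rightarrow> galg \<Rightarrow> galg" where
  "Gam' a P b Q = (\<Sum>i<length a. \<Sum>j<length b. gterm' a i b j P Q)"

lemma Gam_rot: "Gam a P b Q \<approx> Gam' a P b Q"
  unfolding Gam_def Gam'_def
proof (intro eqv_sum)
  fix i j
  show "gterm a i b j P Q \<approx> gterm' a i b j P Q"
  proof (cases "lbr (a ! i) (b ! j)")
    case (fields s x y)
    then show ?thesis unfolding gterm_def gterm'_def
      using eqv_smult[OF eqv_rot[of "mono (x @ drop (Suc i) a) * P * mono (take i a @ y @ drop (Suc j) b) * Q" "mono (take j b)"], of s]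
      by (simp add: mono_append mult.assoc)
  qed
qed

definition w0 :: galg where "w0 = mono [Ui, Vi]"
definition Rr :: galg where
  "Rr = mono [Ui] + mono [Vi] - mono [Ui, Vi] + mono [Ui, Vi, Ui] + mono [Ui, Vi, Ui, Vi] + mono [Vi, Ui] + mono [Vi, Ui, Vi]"
definition Ww :: galg where "Ww = mono [V] + mono [Ui] + mono [Ui, Vi]"

lemma core_calc:
  "Gam' [U] P [U] Q + Gam' [U] P [V] Q + Gam' [U] P [Ui] Q + Gam' [U] P [Vi] Q + Gam' [U] P [Ui, Vi] Q +
   Gam' [V] P [U] Q + Gam' [V] P [V] Q + Gam' [V] P [Ui] Q + Gam' [V] P [Vi] Q + Gam' [V] P [Ui, Vi] Q +
   Gam' [Ui] P [U] Q + Gam' [Ui] P [V] Q + Gam' [Ui] P [Ui] Q + Gam' [Ui] P [Vi] Q + Gam' [Ui] P [Ui, Vi] Q +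
   Gam' [Vi] P [U] Q + Gam' [Vi] P [V] Q + Gam' [Vi] P [Ui] Q + Gam' [Vi] P [Vi] Q + Gam' [Vi] P [Ui, Vi] Q +
   Gam' [Ui, Vi] P [U] Q + Gam' [Ui, Vi] P [V] Q + Gam' [Ui, Vi] P [Ui] Q + Gam' [Ui, Vi] P [Vi] Q + Gam' [Ui, Vi] P [Ui, Vi] Q
   = - (hK * P * w0 * Q) + P * Rr * Q + (mono [U, V] - mono [V, U]) * P * Q"
  by (simp add: Gam'_def gterm'_def hK_def w0_def Rr_def mono_simps algebra_simps)

lemma Z_calc: "Rr + mono [U, V] - mono [V, U] - w0 * hK = hK * Ww - Ww * hK"
  by (simp add: hK_def w0_def Rr_def Ww_def mono_simps algebra_simps)



lemma muK_add: "muK (T1 + T2) = muK T1 + muK T2"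
  unfolding muK_def
  by (rule setsum_keys_plus_distrib) (simp_all add: single_add)

lemma muK_zero [simp]: "muK 0 = 0"
  by (simp add: muK_def)

lemma muK_sum: "muK (sum F I) = (\<Sum>i\<in>I. muK (F i))"
  by (induction I rule: infinite_finite_induct) (auto simp: muK_add)

lemma muK_single: "muK (Poly_Mapping.single pq c) = Poly_Mapping.single (fst pq + snd pq) c"
  by (cases "c = 0") (simp_all add: muK_def)

lemma muK_dbr: "muK (dbr_word s a b) \<approx> Poly_Mapping.single 0 s * Gam a 1 b 1"
  unfolding dbr_word_def Gam_def muK_sum sum_distrib_left
proof (intro eqv_sum)
  fix i j
  show "muK (case lbr (a ! i) (b ! j) of (c, x, y) \<Rightarrow>
           Poly_Mapping.single (fgw (take j b @ x @ drop (Suc i) a), fgw (take i a @ y @ drop (Suc j) b)) (s * c))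
       \<approx> Poly_Mapping.single 0 s * gterm a i b j 1 1"
  proof (cases "lbr (a ! i) (b ! j)")
    case (fields c x y)
    have e1: "Poly_Mapping.single (fgw (take j b @ x @ drop (Suc i) a) + fgw (take i a @ y @ drop (Suc j) b)) (s * c)
      = Poly_Mapping.single 0 s * (Poly_Mapping.single 0 c * (mono (take j b) * (mono (x @ drop (Suc i) a) * mono (take i a @ y @ drop (Suc j) b))))"
      by (simp add: mono_def fgw_append mult_single add.assoc)
    have e2: "Poly_Mapping.single 0 s * (Poly_Mapping.single 0 c * (mono (take j b) * (mono (x @ drop (Suc i) a) * mono (take i a @ y @ drop (Suc j) b))))
       \<approx> Poly_Mapping.single 0 s * (Poly_Mapping.single 0 c * ((mono (x @ drop (Suc i) a) * mono (take i a @ y @ drop (Suc j) b)) * mono (take j b)))"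
      by (intro eqv_smult eqv_rot)
    show ?thesis using fields e1 e2 unfolding gterm_def by (simp add: muK_single)
  qed
qed

lemma brK_eqv: "brK f g \<approx> GamT f 1 g 1"
proof -
  have "brK f g = (\<Sum>p\<in>Poly_Mapping.keys f. \<Sum>q\<in>Poly_Mapping.keys g.
          muK (dbr_word (Poly_Mapping.lookup f p * Poly_Mapping.lookup g q) (Rep_fg p) (Rep_fg q)))"
    by (simp add: brK_def dbrK_def muK_sum)
  also have "\<dots> \<approx> (\<Sum>p\<in>Poly_Mapping.keys f. \<Sum>q\<in>Poly_Mapping.keys g.
          Poly_Mapping.single 0 (Poly_Mapping.lookup f p * Poly_Mapping.lookup g q) * Gam (Rep_fg p) 1 (Rep_fg q) 1)"
    by (intro eqv_sum muK_dbr)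
  also have "\<dots> = GamT f 1 g 1"
    by (simp add: GamT_def GamR_def ext_def sum_distrib_left sc_mult)
  finally show ?thesis .
qed

lemma A_side:
  assumes h: "\<And>k. GamT H (H ^ k) g Q \<in> comm_space"
  shows "0 < N \<Longrightarrow> GamT (H ^ N) (H ^ m) g Q \<in> comm_space"
proof (induction N arbitrary: m)
  case 0 then show ?case by simp
next
  case (Suc n)
  show ?case
  proof (cases "n = 0")
    case True then show ?thesis using h by simp
  next
    case False
    have "GamT (H ^ Suc n) (H ^ m) g Q = GamT H (H ^ n * H ^ m) g Q + GamT (H ^ n) (H ^ m * H) g Q"
      by (simp only: power_Suc GamT_mult_a)
    also have "\<dots> = GamT H (H ^ (n + m)) g Q + GamT (H ^ n) (H ^ Suc m) g Q"
      by (simp only: power_add power_Suc2)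
    finally show ?thesis using Suc.IH[of "Suc m"] h[of "n + m"] False by (simp add: comm_space.add)
  qed
qed

lemma B_side:
  assumes h: "\<And>k m. GamT H (H ^ k) H (H ^ m) \<in> comm_space"
  shows "0 < M \<Longrightarrow> GamT H (H ^ k) (H ^ M) (H ^ m) \<in> comm_space"
proof (induction M arbitrary: m)
  case 0 then show ?case by simp
next
  case (Suc n)
  show ?case
  proof (cases "n = 0")
    case True then show ?thesis using h by simp
  next
    case False
    have "GamT H (H ^ k) (H ^ Suc n) (H ^ m) \<approx> GamT H (H ^ k) H (H ^ n * H ^ m) + GamT H (H ^ k) (H ^ n) (H ^ m * H)"
      by (simp only: power_Suc GamT_mult_b)
    also have "\<dots> = GamT H (H ^ k) H (H ^ (n + m)) + GamT H (H ^ k) (H ^ n) (H ^ Suc m)"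
      by (simp only: power_add power_Suc2)
    finally have "GamT H (H ^ k) (H ^ Suc n) (H ^ m) \<approx> GamT H (H ^ k) H (H ^ (n + m)) + GamT H (H ^ k) (H ^ n) (H ^ Suc m)" .
    moreover have "GamT H (H ^ k) H (H ^ (n + m)) + GamT H (H ^ k) (H ^ n) (H ^ Suc m) \<in> comm_space"
      using Suc.IH[of "Suc m"] h[of k "n + m"] False by (simp add: comm_space.add)
    ultimately show ?thesis by (rule eqv_cs)
  qed
qed



lemma eqv_neg: "x \<approx> y \<Longrightarrow> - x \<approx> - y"
  using eqv_diff[OF eqv_refl[of 0]] by simp

lemma GamT_hK: "GamT hK P hK Q =
   Gam [U] P [U] Q + Gam [U] P [V] Q + Gam [U] P [Ui] Q + Gam [U] P [Vi] Q + Gam [U] P [Ui, Vi] Q +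
   Gam [V] P [U] Q + Gam [V] P [V] Q + Gam [V] P [Ui] Q + Gam [V] P [Vi] Q + Gam [V] P [Ui, Vi] Q +
   Gam [Ui] P [U] Q + Gam [Ui] P [V] Q + Gam [Ui] P [Ui] Q + Gam [Ui] P [Vi] Q + Gam [Ui] P [Ui, Vi] Q +
   Gam [Vi] P [U] Q + Gam [Vi] P [V] Q + Gam [Vi] P [Ui] Q + Gam [Vi] P [Vi] Q + Gam [Vi] P [Ui, Vi] Q +
   Gam [Ui, Vi] P [U] Q + Gam [Ui, Vi] P [V] Q + Gam [Ui, Vi] P [Ui] Q + Gam [Ui, Vi] P [Vi] Q + Gam [Ui, Vi] P [Ui, Vi] Q"
  by (simp add: GamT_def GamR_def hK_def mono_def ext_add ext_single Rep_fgw reduce_def add.assoc)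

lemma core:
  "GamT hK (hK ^ k) hK (hK ^ m) \<in> comm_space"
proof -
  let ?P = "hK ^ k" and ?Q = "hK ^ m" and ?K = "hK ^ (k + m)"
  have "GamT hK ?P hK ?Q \<approx> - (hK * ?P * w0 * ?Q) + ?P * Rr * ?Q + (mono [U, V] - mono [V, U]) * ?P * ?Q"
    unfolding GamT_hK core_calc[symmetric] by (intro eqv_add Gam_rot)
  also have "\<dots> \<approx> - (w0 * hK * ?K) + Rr * ?K + (mono [U, V] - mono [V, U]) * ?K"
  proof (intro eqv_add eqv_neg)
    have "hK * ?P * w0 * ?Q = (hK * ?P) * (w0 * ?Q)" by (simp add: mult.assoc)
    also have "\<dots> \<approx> (w0 * ?Q) * (hK * ?P)" by (rule eqv_rot)
    also have "(w0 * ?Q) * (hK * ?P) = w0 * hK * ?K"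
    proof -
      have "?Q * (hK * ?P) = hK * ?K"
        by (simp only: power_Suc[symmetric] power_add[symmetric]) (simp add: add.commute)
      then show ?thesis by (simp add: mult.assoc)
    qed
    finally show "hK * ?P * w0 * ?Q \<approx> w0 * hK * ?K" .
    have "?P * Rr * ?Q = ?P * (Rr * ?Q)" by (simp add: mult.assoc)
    also have "\<dots> \<approx> (Rr * ?Q) * ?P" by (rule eqv_rot)
    also have "(Rr * ?Q) * ?P = Rr * ?K" by (simp only: mult.assoc power_add[symmetric]) (simp add: add.commute)
    finally show "?P * Rr * ?Q \<approx> Rr * ?K" .
    show "(mono [U, V] - mono [V, U]) * ?P * ?Q \<approx> (mono [U, V] - mono [V, U]) * ?K"
      by (simp add: mult.assoc power_add)
  qed
  also have "- (w0 * hK * ?K) + Rr * ?K + (mono [U, V] - mono [V, U]) * ?K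
      = (Rr + mono [U, V] - mono [V, U] - w0 * hK) * ?K"
    by (simp add: algebra_simps)
  also have "\<dots> = hK * (Ww * ?K) - (Ww * ?K) * hK"
    unfolding Z_calc by (simp add: algebra_simps power_commutes)
  finally show ?thesis by (rule eqv_cs) (rule comm_space.comm)
qed

theorem mainTheorem2:
  fixes N M :: nat
  assumes "N > 0" and "M > 0"
  shows "brK (hK ^ N) (hK ^ M) \<in> comm_space"
proof -
  have b: "GamT hK (hK ^ k) (hK ^ M) (hK ^ 0) \<in> comm_space" for k
    by (rule B_side[OF core assms(2)])
  have "GamT (hK ^ N) (hK ^ 0) (hK ^ M) (hK ^ 0) \<in> comm_space"
    by (rule A_side[OF b assms(1)])
  then have "GamT (hK ^ N) 1 (hK ^ M) 1 \<in> comm_space" by simp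
  then show ?thesis by (rule eqv_cs[OF brK_eqv])
qed

end
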